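(* Let $p(z)=z^n+a_nz^{n-1}+\cdots+a_2z+a_1$ be a complex monic polynomial with $n\geq2$ and $a_1\neq0$. If $z\in\mathbb{C}$ is any zero of $p$, then $$|z|\leq\left\{\frac{1}{4}\left(\frac{\delta+1+\sqrt{(\delta-1)^2+4\delta'}}{2}\right)+\frac{3}{4}\left(\frac{1}{2}\left(\delta_1+\delta+\sqrt{(\delta_1-\delta)^2+4\delta_2}\right)+1\right)^{1/2}\right\}^{1/4}.$$
   Context: Let $C_p$ be the $n\times n$ matrix whose first row is $(-a_n,-a_{n-1},\dots,-a_2,-a_1)$, whose entries $(k+1,k)$ equal $1$ for $k=1,\dots,n-1$, and whose other entries are $0$. Define numbers $b_j,c_j,d_j$ ($j=1,\dots,n$) by: the first row of $C_p^2$ is $(b_n,b_{n-1},\dots,b_1)$, the first row of $C_p^3$ is $(c_n,\dots,c_1)$, the first row of $C_p^4$ is $(d_n,\dots,d_1)$ (so $b_j=a_na_j-a_{j-1}$, $c_j=-a_nb_j+a_{n-1}a_j-a_{j-2}$ with $a_0=a_{-1}=0$). Set $\alpha=\sum_{j=1}^n|a_j|^2$, $\beta=\sum_{j=1}^n|b_j|^2$, $\gamma=-\sum_{j=1}^n b_j\overline{a_j}$, $\delta=\frac{1}{2}\left(\alpha+\beta+\sqrt{(\alpha-\beta)^2+4|\gamma|^2}\right)$; $\alpha'=\sum_{j=3}^n|a_j|^2$, $\beta'=\sum_{j=3}^n|b_j|^2$, $\gamma'=-\sum_{j=3}^n\overline{a_j}b_j$, $\delta'=\frac12\left(\alpha'+\beta'+\sqrt{(\alpha'-\beta')^2+4|\gamma'|^2}\right)$;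 $\alpha_1=\sum_{j=1}^n|d_j|^2$, $\beta_1=\sum_{j=1}^n|c_j|^2$, $\gamma_1=\sum_{j=1}^n d_j\overline{c_j}$, $\delta_1=\frac12\left(\alpha_1+\beta_1+\sqrt{(\alpha_1-\beta_1)^2+4|\gamma_1|^2}\right)$; $\gamma_2=\sum_{j=1}^n d_j\overline{b_j}$, $\gamma_3=\sum_{j=1}^n d_j\overline{a_j}$, $\gamma_4=\sum_{j=1}^n c_j\overline{b_j}$, $\gamma_5=\sum_{j=1}^n c_j\overline{a_j}$, and $\delta_2=\frac12\Big(|\gamma_2|^2+|\gamma_3|^2+|\gamma_4|^2+|\gamma_5|^2+\sqrt{\big((|\gamma_2|^2+|\gamma_3|^2)-(|\gamma_4|^2+|\gamma_5|^2)\big)^2+4|\gamma_2\overline{\gamma_4}+\gamma_3\overline{\gamma_5}|^2}\Big)$. *)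

theory Defs
  imports Complex_Main
begin

text \<open>Matrices are represented as functions on indices 1..n (rows and columns).\<close>

definition companion :: "nat \<Rightarrow> (nat \<Rightarrow> complex) \<Rightarrow> nat \<Rightarrow> nat \<Rightarrow> complex" where
  "companion n a i j = (if i = 1 then - a (n + 1 - j) else if i = j + 1 then 1 else 0)"

definition mmult :: "nat \<Rightarrow> (nat \<Rightarrow> nat \<Rightarrow> complex) \<Rightarrow> (nat \<Rightarrow> nat \<Rightarrow> complex) \<Rightarrow> nat \<Rightarrow> nat \<Rightarrow> complex" where
  "mmult n A B i j = (\<Sum>k=1..n. A i k * B k j)"

fun mpow :: "nat \<Rightarrow> (nat \<Rightarrow> nat \<Rightarrow> complex) \<Rightarrow> nat \<Rightarrow> nat \<Rightarrow> nat \<Rightarrow> complex" where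
  "mpow n A 0 = (\<lambda>i j. if i = j then 1 else 0)"
| "mpow n A (Suc k) = mmult n (mpow n A k) A"

text \<open>Coefficient j (1 \<le> j \<le> n) read off from the first row (row 1, column n+1-j) of C_p^k;
  so the first row of C_p^k is (x_n, ..., x_1).\<close>
definition rowcoef :: "nat \<Rightarrow> (nat \<Rightarrow> complex) \<Rightarrow> nat \<Rightarrow> nat \<Rightarrow> complex" where
  "rowcoef n a k j = mpow n (companion n a) k 1 (n + 1 - j)"

definition bco where "bco n a = rowcoef n a 2"
definition cco where "cco n a = rowcoef n a 3"
definition dco where "dco n a = rowcoef n a 4"

definition lam :: "real \<Rightarrow> real \<Rightarrow> real \<Rightarrow> real" where
  "lam x y g = (x + y + sqrt ((x - y)^2 + 4 * g)) / 2"

definition delta :: "nat \<Rightarrow> (nat \<Rightarrow> complex) \<Rightarrow> real" where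
  "delta n a = lam (\<Sum>j=1..n. (cmod (a j))^2) (\<Sum>j=1..n. (cmod (bco n a j))^2)
                   ((cmod (- (\<Sum>j=1..n. bco n a j * cnj (a j))))^2)"

definition delta' :: "nat \<Rightarrow> (nat \<Rightarrow> complex) \<Rightarrow> real" where
  "delta' n a = lam (\<Sum>j=3..n. (cmod (a j))^2) (\<Sum>j=3..n. (cmod (bco n a j))^2)
                   ((cmod (- (\<Sum>j=3..n. cnj (a j) * bco n a j)))^2)"

definition delta1 :: "nat \<Rightarrow> (nat \<Rightarrow> complex) \<Rightarrow> real" where
  "delta1 n a = lam (\<Sum>j=1..n. (cmod (dco n a j))^2) (\<Sum>j=1..n. (cmod (cco n a j))^2)
                   ((cmod (\<Sum>j=1..n. dco n a j * cnj (cco n a j)))^2)"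

definition delta2 :: "nat \<Rightarrow> (nat \<Rightarrow> complex) \<Rightarrow> real" where
  "delta2 n a = (let
     g2 = (\<Sum>j=1..n. dco n a j * cnj (bco n a j));
     g3 = (\<Sum>j=1..n. dco n a j * cnj (a j));
     g4 = (\<Sum>j=1..n. cco n a j * cnj (bco n a j));
     g5 = (\<Sum>j=1..n. cco n a j * cnj (a j))
   in lam ((cmod g2)^2 + (cmod g3)^2) ((cmod g4)^2 + (cmod g5)^2)
          ((cmod (g2 * cnj g4 + g3 * cnj g5))^2))"

end

theory Submission
  imports Defs "HOL-Analysis.L2_Norm"
begin


lemma lam_real:
  assumes "0 \<le> s" "0 \<le> t" "0 \<le> g"
  shows "\<alpha>*s^2 + \<beta>*t^2 + 2*sqrt g*s*t \<le> lam \<alpha> \<beta> g * (s^2 + t^2)"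
proof -
  define r where "r = sqrt ((\<alpha>-\<beta>)^2 + 4*g)"
  have nn: "0 \<le> (\<alpha>-\<beta>)^2 + 4*g" using assms by simp
  have r0: "r \<ge> 0" unfolding r_def using nn by simp
  have rr: "r^2 = (\<alpha>-\<beta>)^2 + 4*g" proof -
    have "0 \<le> (\<alpha>-\<beta>)^2 + 4*g" using assms by simp
    thus ?thesis unfolding r_def by simp
  qed
  have "sqrt ((\<alpha>-\<beta>)^2) \<le> r" unfolding r_def by (rule real_sqrt_le_mono) (use assms in simp)
  hence rge: "r \<ge> \<bar>\<alpha>-\<beta>\<bar>" by simp
  define p where "p = (\<beta>-\<alpha>+r)/2"
  define q where "q = (\<alpha>-\<beta>+r)/2"
  have p0: "p \<ge> 0" "q \<ge> 0" unfolding p_def q_def using rge by auto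
  have pq: "p*q = g" unfolding p_def q_def using rr by (simp add: field_simps power2_eq_square)
  have lp: "lam \<alpha> \<beta> g = \<alpha> + p" "lam \<alpha> \<beta> g = \<beta> + q" unfolding lam_def p_def q_def r_def by (simp_all add: field_simps)
  have sg: "sqrt g = sqrt p * sqrt q" using pq by (metis real_sqrt_mult)
  have "0 \<le> (sqrt p * s - sqrt q * t)^2" by simp
  hence "2*sqrt g*s*t \<le> p*s^2 + q*t^2" using p0 sg
    by (simp add: power2_eq_square algebra_simps)
  moreover have "lam \<alpha> \<beta> g * (s^2 + t^2) = (\<alpha>+p)*s^2 + (\<beta>+q)*t^2"
    by (subst distrib_left, subst (1) lp(1), subst lp(2)) (simp add: algebra_simps)
  ultimately show ?thesis by (simp add: algebra_simps)
qed

lemma lam_cplx: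
  "A*(cmod u)^2 + B*(cmod w)^2 + 2*Re(\<gamma>*u*cnj w) \<le> lam A B ((cmod \<gamma>)^2) * ((cmod u)^2 + (cmod w)^2)"
proof -
  have "Re(\<gamma>*u*cnj w) \<le> cmod (\<gamma>*u*cnj w)" by (rule complex_Re_le_cmod)
  also have "\<dots> = sqrt ((cmod \<gamma>)^2) * cmod u * cmod w" by (simp add: norm_mult)
  finally have "A*(cmod u)^2 + B*(cmod w)^2 + 2*Re(\<gamma>*u*cnj w) \<le> A*(cmod u)^2 + B*(cmod w)^2 + 2*sqrt ((cmod \<gamma>)^2)*cmod u*cmod w"
    by simp
  also have "\<dots> \<le> lam A B ((cmod \<gamma>)^2) * ((cmod u)^2 + (cmod w)^2)" by (rule lam_real) auto
  finally show ?thesis .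
qed

lemma cmod_add_sq: "(cmod (p + q))^2 = (cmod p)^2 + (cmod q)^2 + 2*Re(p*cnj q)"
  unfolding cmod_power2 by (simp add: power2_eq_square algebra_simps)

lemma expand:
  "(\<Sum>j\<in>S. (cmod (u*f j + w*g j))^2) = (cmod u)^2*(\<Sum>j\<in>S. (cmod (f j))^2) + (cmod w)^2*(\<Sum>j\<in>S. (cmod (g j))^2)
     + 2*Re(u*cnj w*(\<Sum>j\<in>S. f j * cnj (g j)))"
proof -
  have "\<And>j. (cmod (u*f j + w*g j))^2 = (cmod u)^2*(cmod (f j))^2 + (cmod w)^2*(cmod (g j))^2 + 2*Re(u*cnj w*(f j * cnj (g j)))"
    by (simp add: cmod_add_sq norm_mult power_mult_distrib mult.commute mult.left_commute)
  thus ?thesis by (simp add: sum.distrib sum_distrib_left Re_sum)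
qed

lemma reflect:
  fixes lo hi m :: nat
  assumes "lo \<le> hi" "hi \<le> m"
  shows "(\<Sum>j\<in>{lo..hi}. f (m - j)) = (\<Sum>i\<in>{m-hi..m-lo}. f i)"
  apply (rule sum.reindex_bij_witness[of _ "\<lambda>i. m - i" "\<lambda>i. m - i"])
  using assms by auto



lemma lam_sym: "lam x y g = lam y x g"
  unfolding lam_def by (simp add: power2_commute add.commute)

lemma lam_nonneg: "0 \<le> x \<Longrightarrow> 0 \<le> y \<Longrightarrow> 0 \<le> g \<Longrightarrow> 0 \<le> lam x y g"
  unfolding lam_def by (simp add: add_nonneg_nonneg)

lemma sum_delta1:
  fixes f :: "nat \<Rightarrow> complex"
  assumes "i \<in> S" "finite S"
  shows "(\<Sum>l\<in>S. (if i = l then 1 else 0) * f l) = f i"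
proof -
  have "(\<Sum>l\<in>S. (if i = l then 1 else 0) * f l) = (\<Sum>l\<in>S. if l = i then f l else 0)"
    by (rule sum.cong) auto
  thus ?thesis using assms by simp
qed

lemma mink:
  "(\<Sum>j\<in>S. (cmod (f j + g j))^2) \<le> (sqrt (\<Sum>j\<in>S. (cmod (f j))^2) + sqrt (\<Sum>j\<in>S. (cmod (g j))^2))^2"
proof -
  have "L2_set (\<lambda>j. cmod (f j + g j)) S \<le> L2_set (\<lambda>j. cmod (f j) + cmod (g j)) S"
    by (rule L2_set_mono) (auto simp: norm_triangle_ineq)
  also have "\<dots> \<le> L2_set (\<lambda>j. cmod (f j)) S + L2_set (\<lambda>j. cmod (g j)) S"
    by (rule L2_set_triangle_ineq)
  finally have "(L2_set (\<lambda>j. cmod (f j + g j)) S)^2 \<le> (L2_set (\<lambda>j. cmod (f j)) S + L2_set (\<lambda>j. cmod (g j)) S)^2"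
    by (intro power_mono) auto
  thus ?thesis unfolding L2_set_def by (simp add: sum_nonneg)
qed

lemma cs2: "p*s + q*t \<le> sqrt (p^2+q^2) * sqrt (s^2+t^2)" for p q s t :: real
proof -
  have "(p*s + q*t)^2 \<le> (p^2+q^2)*(s^2+t^2)"
  proof -
    have "0 \<le> (p*t - q*s)^2" by simp
    thus ?thesis by (simp add: power2_eq_square algebra_simps)
  qed
  hence "sqrt ((p*s + q*t)^2) \<le> sqrt ((p^2+q^2)*(s^2+t^2))" by (rule real_sqrt_le_mono)
  thus ?thesis by (simp add: real_sqrt_mult)
qed

lemma mpow_shift:
  assumes "2 \<le> i" "i \<le> n"
  shows "mpow n (companion n a) (Suc k) i j = mpow n (companion n a) k (i-1) j"
  using assms
proof (induction k arbitrary: j)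
  case 0
  have "mpow n (companion n a) (Suc 0) i j = (\<Sum>l=1..n. (if i = l then 1 else 0) * companion n a l j)"
    by (simp add: mmult_def)
  also have "\<dots> = companion n a i j"
    using 0 by (intro sum_delta1) auto
  also have "\<dots> = mpow n (companion n a) 0 (i-1) j"
    using 0 by (auto simp: companion_def)
  finally show ?case .
next
  case (Suc k)
  have "mpow n (companion n a) (Suc (Suc k)) i j = (\<Sum>l=1..n. mpow n (companion n a) (Suc k) i l * companion n a l j)"
    by (simp add: mmult_def)
  also have "\<dots> = (\<Sum>l=1..n. mpow n (companion n a) k (i-1) l * companion n a l j)"
    using Suc by simp
  also have "\<dots> = mpow n (companion n a) (Suc k) (i-1) j"
    by (simp add: mmult_def)
  finally show ?case .
qed

lemma mpow_rows:
  assumes "Suc m \<le> n"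
  shows "mpow n (companion n a) k (Suc m) j =
    (if Suc m \<le> k then mpow n (companion n a) (k - m) 1 j else if Suc m - k = j then 1 else 0)"
  using assms
proof (induction m arbitrary: k)
  case 0
  then show ?case by (cases k) auto
next
  case (Suc m)
  show ?case
  proof (cases k)
    case 0
    then show ?thesis by simp
  next
    case (Suc k')
    have "mpow n (companion n a) k (Suc (Suc m)) j = mpow n (companion n a) k' (Suc m) j"
      using Suc.prems mpow_shift[of "Suc (Suc m)" n a k' j] Suc by simp
    also have "\<dots> = (if Suc m \<le> k' then mpow n (companion n a) (k' - m) 1 j else if Suc m - k' = j then 1 else 0)"
      using Suc.IH Suc.prems by simp
    finally show ?thesis using Suc by simp
  qed
qed

lemma mpow_row1_1:
  assumes "1 \<le> j" "j \<le> n"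
  shows "mpow n (companion n a) 1 1 j = - a (n + 1 - j)"
proof -
  have "mpow n (companion n a) 1 1 j = (\<Sum>l=1..n. (if 1 = l then 1 else 0) * companion n a l j)"
    by (simp add: mmult_def)
  also have "\<dots> = companion n a 1 j"
    using assms by (intro sum_delta1) auto
  finally show ?thesis by (simp add: companion_def)
qed

lemma rowcoef_col:
  assumes "1 \<le> j" "j \<le> n"
  shows "rowcoef n a k (n + 1 - j) = mpow n (companion n a) k 1 j"
  using assms unfolding rowcoef_def by (simp add: Suc_diff_le)



definition yv :: "nat \<Rightarrow> (nat \<Rightarrow> complex) \<Rightarrow> complex \<Rightarrow> nat \<Rightarrow> complex" where
  "yv n a z j = z^(n-j) + (\<Sum>k=j+1..n. a k * z^(k-1-j))"

definition xv :: "nat \<Rightarrow> (nat \<Rightarrow> complex) \<Rightarrow> complex \<Rightarrow> nat \<Rightarrow> complex" where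
  "xv n a z i = yv n a z (n+1-i)"

lemma yrec:
  assumes "1 \<le> j" "j \<le> n"
  shows "yv n a z (j-1) = z * yv n a z j + a j"
proof -
  have s: "(\<Sum>k=j..n. a k * z^(k-j)) = a j + (\<Sum>k=Suc j..n. a k * z^(k-j))"
    using assms by (simp add: sum.atLeast_Suc_atMost)
  have t: "z * (\<Sum>k=j+1..n. a k * z^(k-1-j)) = (\<Sum>k=Suc j..n. a k * z^(k-j))"
    unfolding sum_distrib_left
  proof (rule sum.cong)
    fix k assume "k \<in> {Suc j..n}"
    hence "k - j = Suc (k-1-j)" by auto
    thus "z * (a k * z ^ (k - 1 - j)) = a k * z ^ (k - j)" by simp
  qed simp
  have e: "n - (j-1) = Suc (n-j)" using assms by auto
  have "yv n a z (j-1) = z^(n-(j-1)) + (\<Sum>k=j..n. a k * z^(k-j))"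
    unfolding yv_def using assms by simp
  also have "\<dots> = z * yv n a z j + a j"
    unfolding yv_def s distrib_left t e by simp
  finally show ?thesis .
qed

lemma y0:
  assumes "z ^ n + (\<Sum>j=1..n. a j * z ^ (j - 1)) = 0"
  shows "yv n a z 0 = 0"
  using assms unfolding yv_def by simp

lemma x1: "xv n a z 1 = 1"
  unfolding xv_def yv_def by simp

lemma xzero:
  assumes "z ^ n + (\<Sum>j=1..n. a j * z ^ (j - 1)) = 0" "n < i"
  shows "xv n a z i = 0"
  using assms y0[OF assms(1)] unfolding xv_def by simp

lemma eig:
  assumes h: "z ^ n + (\<Sum>j=1..n. a j * z ^ (j - 1)) = 0" and c: "1 \<le> col" "col \<le> n"
  shows "(\<Sum>i=1..n. xv n a z i * companion n a i col) = z * xv n a z col"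
proof -
  have "(\<Sum>i=1..n. xv n a z i * companion n a i col)
      = xv n a z 1 * companion n a 1 col + (\<Sum>i=Suc 1..n. xv n a z i * companion n a i col)"
    using c by (simp add: sum.atLeast_Suc_atMost)
  also have "(\<Sum>i=Suc 1..n. xv n a z i * companion n a i col) = (\<Sum>i=Suc 1..n. if i = col+1 then xv n a z i else 0)"
    by (rule sum.cong) (auto simp: companion_def)
  also have "\<dots> = (if col + 1 \<le> n then xv n a z (col+1) else 0)"
    using c by simp
  finally have e0: "(\<Sum>i=1..n. xv n a z i * companion n a i col) = xv n a z 1 * companion n a 1 col + (if col + 1 \<le> n then xv n a z (col+1) else 0)" .
  have c1: "companion n a 1 col = - a (n+1-col)" by (simp add: companion_def)
  have e: "(\<Sum>i=1..n. xv n a z i * companion n a i col) = - a (n+1-col) + (if col + 1 \<le> n then xv n a z (col+1) else 0)"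
    unfolding e0 c1 x1 by simp
  show ?thesis
  proof (cases "col + 1 \<le> n")
    case True
    have "xv n a z (col+1) = yv n a z ((n+1-col) - 1)" unfolding xv_def by simp
    also have "\<dots> = z * yv n a z (n+1-col) + a (n+1-col)" using c by (intro yrec) auto
    finally show ?thesis using e True unfolding xv_def by simp
  next
    case False
    hence cn: "col = n" using c by simp
    have "yv n a z (1 - 1) = z * yv n a z 1 + a 1" using c by (intro yrec) auto
    hence "z * yv n a z 1 = - a 1" using y0[OF h] by (simp add: eq_neg_iff_add_eq_0 add.commute)
    thus ?thesis using e False cn unfolding xv_def by simp
  qed
qed

lemma eigk:
  assumes h: "z ^ n + (\<Sum>j=1..n. a j * z ^ (j - 1)) = 0" and c: "1 \<le> col" "col \<le> n"
  shows "(\<Sum>i=1..n. xv n a z i * mpow n (companion n a) k i col) = z^k * xv n a z col"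
  using c
proof (induction k arbitrary: col)
  case 0
  have "(\<Sum>i=1..n. xv n a z i * mpow n (companion n a) 0 i col) = (\<Sum>i=1..n. if i = col then xv n a z i else 0)"
    by (rule sum.cong) auto
  then show ?case using 0 by simp
next
  case (Suc k)
  have "(\<Sum>i=1..n. xv n a z i * mpow n (companion n a) (Suc k) i col)
      = (\<Sum>i=1..n. \<Sum>l=1..n. xv n a z i * mpow n (companion n a) k i l * companion n a l col)"
    by (simp add: mmult_def sum_distrib_left mult.assoc)
  also have "\<dots> = (\<Sum>l=1..n. (\<Sum>i=1..n. xv n a z i * mpow n (companion n a) k i l) * companion n a l col)"
    by (subst sum.swap) (simp add: sum_distrib_right)
  also have "\<dots> = (\<Sum>l=1..n. z^k * (xv n a z l * companion n a l col))"
  proof (rule sum.cong)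
    fix l assume "l \<in> {1..n}"
    thus "(\<Sum>i=1..n. xv n a z i * mpow n (companion n a) k i l) * companion n a l col = z^k * (xv n a z l * companion n a l col)"
      using Suc.IH[of l] by (simp add: mult.assoc)
  qed simp
  also have "\<dots> = z^k * (z * xv n a z col)"
    by (subst sum_distrib_left[symmetric], subst eig[OF h Suc.prems], rule refl)
  finally show ?case by simp
qed



lemma rowsR:
  assumes "1 \<le> i" "i \<le> n"
  shows "mpow n (companion n a) k i col =
    (if i \<le> k then mpow n (companion n a) (k + 1 - i) 1 col else if i - k = col then 1 else 0)"
proof -
  obtain m where m: "i = Suc m" using assms by (cases i) auto
  show ?thesis using mpow_rows[of m n a k col] assms m by (auto simp: Suc_diff_le)
qed

lemma rel2:
  assumes h: "z ^ n + (\<Sum>j=1..n. a j * z ^ (j - 1)) = 0" and n2: "2 \<le> n" and j: "1 \<le> j" "j \<le> n"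
  shows "z^2 * xv n a z (n+1-j) = xv n a z 1 * bco n a j + xv n a z 2 * (- a j) + xv n a z (n+3-j)"
proof -
  define col where "col = n+1-j"
  have c: "1 \<le> col" "col \<le> n" using j unfolding col_def by auto
  have jc: "j = n + 1 - col" using j unfolding col_def by auto
  let ?M = "mpow n (companion n a) 2"
  have "z^2 * xv n a z col = (\<Sum>i=1..n. xv n a z i * ?M i col)"
    using eigk[OF h c, of 2] by simp
  also have "\<dots> = (\<Sum>i=1..2+(n-2). xv n a z i * ?M i col)"
  proof -
    have "2+(n-2) = n" using n2 by simp
    thus ?thesis by (simp only:)
  qed
  also have "\<dots> = (\<Sum>i=1..2. xv n a z i * ?M i col) + (\<Sum>i=2+1..2+(n-2). xv n a z i * ?M i col)"
    by (rule sum.ub_add_nat) simp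
  also have "(\<Sum>i=2+1..2+(n-2). xv n a z i * ?M i col) = (\<Sum>i=3..n. if i = col + 2 then xv n a z i else 0)"
    using n2 by (intro sum.cong) (auto simp: rowsR)
  also have "\<dots> = xv n a z (col+2)"
    using xzero[OF h, of "col+2"] c by auto
  also have "(\<Sum>i=1..2. xv n a z i * ?M i col) = xv n a z 1 * ?M 1 col + xv n a z 2 * ?M 2 col"
    by (simp add: numeral_2_eq_2)
  also have "?M 1 col = bco n a j"
    unfolding bco_def jc using rowcoef_col[OF c] by simp
  also have "?M 2 col = - a j"
    using rowsR[of 2 n a 2 col] n2 mpow_row1_1[OF c] jc by simp
  finally have e: "z^2 * xv n a z col = xv n a z 1 * bco n a j + xv n a z 2 * (- a j) + xv n a z (col+2)" .
  have "col + 2 = n+3-j" unfolding col_def using j by simp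
  thus ?thesis using e unfolding col_def by simp
qed

lemma rel4:
  assumes h: "z ^ n + (\<Sum>j=1..n. a j * z ^ (j - 1)) = 0" and n2: "2 \<le> n" and j: "1 \<le> j" "j \<le> n"
  shows "z^4 * xv n a z (n+1-j) = xv n a z 1 * dco n a j + xv n a z 2 * cco n a j
          + xv n a z 3 * bco n a j + xv n a z 4 * (- a j) + xv n a z (n+5-j)"
proof -
  define col where "col = n+1-j"
  have c: "1 \<le> col" "col \<le> n" using j unfolding col_def by auto
  have jc: "j = n + 1 - col" using j unfolding col_def by auto
  let ?M = "mpow n (companion n a)"
  define R where "R i = (if i \<le> 4 then ?M (5 - i) 1 col else if i - 4 = col then 1 else (0::complex))" for i
  have "z^4 * xv n a z col = (\<Sum>i=1..n. xv n a z i * ?M 4 i col)"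
    using eigk[OF h c, of 4] by simp
  also have "\<dots> = (\<Sum>i=1..n. xv n a z i * R i)"
    by (intro sum.cong) (auto simp: rowsR R_def)
  also have "\<dots> = (\<Sum>i=1..n. xv n a z i * R i) + (\<Sum>i=n+1..n+4. xv n a z i * R i)"
    using xzero[OF h] by simp
  also have "\<dots> = (\<Sum>i=1..n+4. xv n a z i * R i)"
    by (rule sum.ub_add_nat[symmetric]) simp
  also have "\<dots> = (\<Sum>i=1..4+n. xv n a z i * R i)" by (simp add: add.commute)
  also have "\<dots> = (\<Sum>i=1..4. xv n a z i * R i) + (\<Sum>i=4+1..4+n. xv n a z i * R i)"
    by (rule sum.ub_add_nat) simp
  also have "(\<Sum>i=4+1..4+n. xv n a z i * R i) = (\<Sum>i=5..4+n. if i = col + 4 then xv n a z i else 0)"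
    by (intro sum.cong) (auto simp: R_def)
  also have "\<dots> = xv n a z (col+4)"
    using c by auto
  also have "{1..4::nat} = {1,2,3,4}" by auto
  finally have e: "z^4 * xv n a z col = xv n a z 1 * R 1 + xv n a z 2 * R 2 + xv n a z 3 * R 3 + xv n a z 4 * R 4 + xv n a z (col+4)"
    by (simp add: algebra_simps)
  have r1: "R 1 = dco n a j" unfolding R_def dco_def jc using rowcoef_col[OF c] by simp
  have r2: "R 2 = cco n a j" unfolding R_def cco_def jc using rowcoef_col[OF c] by simp
  have r3: "R 3 = bco n a j" unfolding R_def bco_def jc using rowcoef_col[OF c] by simp
  have r4: "R 4 = - a j" unfolding R_def using mpow_row1_1[OF c] jc by simp
  have "col + 4 = n+5-j" unfolding col_def using j by simp
  thus ?thesis using e r1 r2 r3 r4 unfolding col_def by simp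
qed



lemma lam_cplx2:
  "(cmod u)^2*A + (cmod w)^2*B + 2*Re(u*cnj w*\<gamma>) \<le> lam A B ((cmod \<gamma>)^2) * ((cmod u)^2 + (cmod w)^2)"
proof -
  have m: "cmod(u*cnj w*\<gamma>) = cmod \<gamma> * cmod u * cmod w" by (simp add: norm_mult)
  have r: "Re(u*cnj w*\<gamma>) \<le> cmod \<gamma> * cmod u * cmod w"
    by (rule order_trans[OF complex_Re_le_cmod]) (simp only: m order_refl)
  have L: "A*(cmod u)^2 + B*(cmod w)^2 + 2*sqrt ((cmod \<gamma>)^2)*cmod u*cmod w \<le> lam A B ((cmod \<gamma>)^2) * ((cmod u)^2 + (cmod w)^2)"
    by (rule lam_real) auto
  have L': "(cmod u)^2*A + (cmod w)^2*B + 2*(cmod \<gamma> * cmod u * cmod w) \<le> lam A B ((cmod \<gamma>)^2) * ((cmod u)^2 + (cmod w)^2)"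
    using L by (simp add: mult_ac)
  show ?thesis using L' r by linarith
qed

lemma gram2:
  "(\<Sum>j\<in>S. (cmod (u*f j + w*g j))^2) \<le>
     lam (\<Sum>j\<in>S. (cmod (f j))^2) (\<Sum>j\<in>S. (cmod (g j))^2) ((cmod (\<Sum>j\<in>S. f j * cnj (g j)))^2) * ((cmod u)^2 + (cmod w)^2)"
  unfolding expand by (rule lam_cplx2)

lemma cross:
  "(\<Sum>j\<in>S. (x1 * D j + x2 * C j) * cnj (x3 * B j + x4 * A j)) =
    cnj x3 * (x1 * (\<Sum>j\<in>S. D j * cnj (B j)) + x2 * (\<Sum>j\<in>S. C j * cnj (B j)))
  + cnj x4 * (x1 * (\<Sum>j\<in>S. D j * cnj (A j)) + x2 * (\<Sum>j\<in>S. C j * cnj (A j)))"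
proof -
  have "\<And>j. (x1 * D j + x2 * C j) * cnj (x3 * B j + x4 * A j) =
     cnj x3 * x1 * (D j * cnj (B j)) + cnj x3 * x2 * (C j * cnj (B j)) + cnj x4 * x1 * (D j * cnj (A j)) + cnj x4 * x2 * (C j * cnj (A j))"
    by (simp add: algebra_simps)
  hence "(\<Sum>j\<in>S. (x1 * D j + x2 * C j) * cnj (x3 * B j + x4 * A j)) =
     cnj x3 * x1 * (\<Sum>j\<in>S. D j * cnj (B j)) + cnj x3 * x2 * (\<Sum>j\<in>S. C j * cnj (B j)) + cnj x4 * x1 * (\<Sum>j\<in>S. D j * cnj (A j)) + cnj x4 * x2 * (\<Sum>j\<in>S. C j * cnj (A j))"
    by (simp only: sum.distrib sum_distrib_left)
  thus ?thesis by (simp add: distrib_left mult.assoc)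
qed

lemma fin:
  fixes G P Q :: real
  assumes "0 \<le> G" "0 \<le> P" "0 \<le> Q"
  shows "(sqrt (G*P) + sqrt Q)^2 \<le> (G+1)*(P+Q)"
proof -
  have "0 \<le> (sqrt G * sqrt Q - sqrt P)^2" by simp
  hence "2 * (sqrt G * sqrt Q * sqrt P) \<le> G*Q + P"
    using assms by (simp add: power2_eq_square algebra_simps power_mult_distrib)
  thus ?thesis using assms
    by (simp add: power2_eq_square algebra_simps real_sqrt_mult)
qed

lemma cross_bound:
  "cmod (cnj x3 * p + cnj x4 * q) \<le> sqrt ((cmod x3)^2 + (cmod x4)^2) * sqrt ((cmod p)^2 + (cmod q)^2)"
proof -
  have "cmod (cnj x3 * p + cnj x4 * q) \<le> cmod x3 * cmod p + cmod x4 * cmod q"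
    by (metis complex_mod_cnj norm_mult norm_triangle_ineq)
  also have "\<dots> \<le> sqrt ((cmod x3)^2 + (cmod x4)^2) * sqrt ((cmod p)^2 + (cmod q)^2)" by (rule cs2)
  finally show ?thesis .
qed



lemma delta_nn: "0 \<le> delta n a" unfolding delta_def by (intro lam_nonneg sum_nonneg) auto
lemma delta1_nn: "0 \<le> delta1 n a" unfolding delta1_def by (intro lam_nonneg sum_nonneg) auto
lemma delta2_nn: "0 \<le> delta2 n a" unfolding delta2_def Let_def by (intro lam_nonneg) auto
lemma delta'_nn: "0 \<le> delta' n a" unfolding delta'_def by (intro lam_nonneg sum_nonneg) auto

lemma gram_pair:
  "(cmod (u*p1 + w*q1))^2 + (cmod (u*p2 + w*q2))^2 \<le>
     lam ((cmod p1)^2 + (cmod p2)^2) ((cmod q1)^2 + (cmod q2)^2) ((cmod (p1 * cnj q1 + p2 * cnj q2))^2) * ((cmod u)^2 + (cmod w)^2)"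
  using gram2[of u "\<lambda>j. if j = 0 then p1 else p2" w "\<lambda>j. if j = 0 then q1 else q2" "{0,1::nat}"]
  by simp

lemma Lbound:
  fixes x1 x2 x3 x4 :: complex
  shows "(\<Sum>j=1..n. (cmod ((x1 * dco n a j + x2 * cco n a j) + (x3 * bco n a j + (- x4) * a j)))^2)
    \<le> lam (delta1 n a) (delta n a) (delta2 n a) * (((cmod x1)^2 + (cmod x2)^2) + ((cmod x3)^2 + (cmod x4)^2))"
proof -
  define U where "U j = x1 * dco n a j + x2 * cco n a j" for j
  define V where "V j = x3 * bco n a j + (- x4) * a j" for j
  define P1 where "P1 = (cmod x1)^2 + (cmod x2)^2"
  define P2 where "P2 = (cmod x3)^2 + (cmod x4)^2"
  have P0: "0 \<le> P1" "0 \<le> P2" unfolding P1_def P2_def by auto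
  have e: "(\<Sum>j=1..n. (cmod (U j + V j))^2) = (\<Sum>j=1..n. (cmod (U j))^2) + (\<Sum>j=1..n. (cmod (V j))^2)
      + 2*Re(\<Sum>j=1..n. U j * cnj (V j))"
    using expand[of 1 U 1 V "{1..n}"] by simp
  have bU: "(\<Sum>j=1..n. (cmod (U j))^2) \<le> delta1 n a * P1"
    unfolding U_def P1_def delta1_def by (rule gram2)
  have bV: "(\<Sum>j=1..n. (cmod (V j))^2) \<le> delta n a * P2"
  proof -
    have "(\<Sum>j=1..n. (cmod (V j))^2) \<le> lam (\<Sum>j=1..n. (cmod (bco n a j))^2) (\<Sum>j=1..n. (cmod (a j))^2)
       ((cmod (\<Sum>j=1..n. bco n a j * cnj (a j)))^2) * ((cmod x3)^2 + (cmod (-x4))^2)"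
      unfolding V_def by (rule gram2)
    thus ?thesis unfolding delta_def P2_def by (simp add: lam_sym)
  qed
  define g2 where "g2 = (\<Sum>j=1..n. dco n a j * cnj (bco n a j))"
  define g3 where "g3 = (\<Sum>j=1..n. dco n a j * cnj (a j))"
  define g4 where "g4 = (\<Sum>j=1..n. cco n a j * cnj (bco n a j))"
  define g5 where "g5 = (\<Sum>j=1..n. cco n a j * cnj (a j))"
  have cr: "(\<Sum>j=1..n. U j * cnj (V j)) = cnj x3 * (x1 * g2 + x2 * g4) + cnj (- x4) * (x1 * g3 + x2 * g5)"
    unfolding U_def V_def g2_def g3_def g4_def g5_def by (rule cross)
  have d2: "(cmod (x1 * g2 + x2 * g4))^2 + (cmod (x1 * g3 + x2 * g5))^2 \<le> delta2 n a * P1"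
    using gram_pair[of x1 g2 x2 g4 g3 g5] unfolding delta2_def Let_def g2_def g3_def g4_def g5_def P1_def .
  have "cmod (\<Sum>j=1..n. U j * cnj (V j)) \<le> sqrt ((cmod x3)^2 + (cmod (-x4))^2) * sqrt ((cmod (x1 * g2 + x2 * g4))^2 + (cmod (x1 * g3 + x2 * g5))^2)"
    unfolding cr by (rule cross_bound)
  also have "\<dots> \<le> sqrt P2 * sqrt (delta2 n a * P1)"
    unfolding P2_def norm_minus_cancel using d2 by (intro mult_left_mono real_sqrt_le_mono) auto
  finally have bc: "Re (\<Sum>j=1..n. U j * cnj (V j)) \<le> sqrt (delta2 n a) * sqrt P1 * sqrt P2"
    using complex_Re_le_cmod[of "\<Sum>j=1..n. U j * cnj (V j)"] by (simp add: real_sqrt_mult mult_ac)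
  have "(\<Sum>j=1..n. (cmod (U j + V j))^2) \<le> delta1 n a * (sqrt P1)^2 + delta n a * (sqrt P2)^2 + 2 * sqrt (delta2 n a) * sqrt P1 * sqrt P2"
    using e bU bV bc P0 by simp
  also have "\<dots> \<le> lam (delta1 n a) (delta n a) (delta2 n a) * ((sqrt P1)^2 + (sqrt P2)^2)"
    using P0 delta2_nn by (intro lam_real) auto
  finally show ?thesis unfolding U_def V_def P1_def P2_def by simp
qed



lemma bound4:
  assumes h: "z ^ n + (\<Sum>j=1..n. a j * z ^ (j - 1)) = 0" and n2: "2 \<le> n"
  shows "(cmod z)^8 \<le> lam (delta1 n a) (delta n a) (delta2 n a) + 1"
proof -
  define x where "x = xv n a z"
  define L where "L j = (x 1 * dco n a j + x 2 * cco n a j) + (x 3 * bco n a j + (- x 4) * a j)" for j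
  define q where "q j = x (n+5-j)" for j
  define P where "P = ((cmod (x 1))^2 + (cmod (x 2))^2) + ((cmod (x 3))^2 + (cmod (x 4))^2)"
  define Q where "Q = (\<Sum>i=5..n+4. (cmod (x i))^2)"
  define N where "N = (\<Sum>i=1..n. (cmod (x i))^2)"
  define G where "G = lam (delta1 n a) (delta n a) (delta2 n a)"
  have G0: "0 \<le> G" unfolding G_def using delta1_nn delta_nn delta2_nn by (intro lam_nonneg)
  have P0: "0 \<le> P" "0 \<le> Q" unfolding P_def Q_def by (auto intro: sum_nonneg)
  have x1': "x 1 = 1" unfolding x_def by (rule x1)
  have NPQ: "N = P + Q"
  proof -
    have "N = (\<Sum>i=1..n. (cmod (x i))^2) + (\<Sum>i=n+1..n+4. (cmod (x i))^2)"
      unfolding N_def x_def using xzero[OF h] by simp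
    also have "\<dots> = (\<Sum>i=1..n+4. (cmod (x i))^2)"
      by (rule sum.ub_add_nat[symmetric]) simp
    also have "\<dots> = (\<Sum>i=1..4+n. (cmod (x i))^2)" by (simp add: add.commute)
    also have "\<dots> = (\<Sum>i=1..4. (cmod (x i))^2) + (\<Sum>i=4+1..4+n. (cmod (x i))^2)"
      by (rule sum.ub_add_nat) simp
    also have "{1..4::nat} = {1,2,3,4}" by auto
    finally show ?thesis unfolding P_def Q_def by (simp add: add.commute add.left_commute add.assoc)
  qed
  have Npos: "0 < N" unfolding NPQ P_def using P0 x1' by (simp add: add_pos_nonneg)
  have lhs: "(\<Sum>j=1..n. (cmod (L j + q j))^2) = (cmod z)^8 * N"
  proof -
    have "(\<Sum>j=1..n. (cmod (L j + q j))^2) = (\<Sum>j=1..n. (cmod z)^8 * (cmod (x (n+1-j)))^2)"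
    proof (rule sum.cong)
      fix j assume "j \<in> {1..n}"
      hence "L j + q j = z^4 * x (n+1-j)"
        using rel4[OF h n2, of j] unfolding L_def q_def x_def by (simp add: algebra_simps)
      thus "(cmod (L j + q j))^2 = (cmod z)^8 * (cmod (x (n+1-j)))^2"
        by (simp add: norm_mult norm_power power_mult_distrib flip: power_mult)
    qed simp
    also have "\<dots> = (cmod z)^8 * (\<Sum>j=1..n. (cmod (x (n+1-j)))^2)"
      by (simp add: sum_distrib_left)
    also have "(\<Sum>j=1..n. (cmod (x (n+1-j)))^2) = N"
      unfolding N_def using reflect[of 1 n "n+1" "\<lambda>i. (cmod (x i))^2"] n2 by simp
    finally show ?thesis .
  qed
  have qQ: "(\<Sum>j=1..n. (cmod (q j))^2) = Q"
    unfolding Q_def q_def using reflect[of 1 n "n+5" "\<lambda>i. (cmod (x i))^2"] n2 by (simp add: add.commute)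
  have Lb: "(\<Sum>j=1..n. (cmod (L j))^2) \<le> G * P"
    unfolding L_def G_def P_def by (rule Lbound)
  have "(cmod z)^8 * N \<le> (sqrt (\<Sum>j=1..n. (cmod (L j))^2) + sqrt Q)^2"
    using mink[of L q "{1..n}"] unfolding lhs qQ .
  also have "\<dots> \<le> (sqrt (G*P) + sqrt Q)^2"
    using Lb P0 by (intro power_mono add_right_mono real_sqrt_le_mono) (auto intro!: add_nonneg_nonneg sum_nonneg)
  also have "\<dots> \<le> (G+1)*N" unfolding NPQ using G0 P0 by (rule fin)
  finally have "(cmod z)^8 * N \<le> (G+1)*N" .
  thus ?thesis unfolding G_def using Npos by simp
qed



lemma bound2:
  assumes h: "z ^ n + (\<Sum>j=1..n. a j * z ^ (j - 1)) = 0" and n2: "2 \<le> n"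
  shows "(cmod z)^4 \<le> lam (delta n a) 1 (delta' n a)"
proof -
  define x where "x = xv n a z"
  define L where "L j = x 1 * bco n a j + (- x 2) * a j" for j
  define q where "q j = x (n+3-j)" for j
  define P where "P = (cmod (x 1))^2 + (cmod (x 2))^2"
  define Q where "Q = (\<Sum>i=3..n. (cmod (x i))^2)"
  define N where "N = (\<Sum>i=1..n. (cmod (x i))^2)"
  define A1 where "A1 = (\<Sum>j=3..n. (cmod (L j))^2)"
  define A2 where "A2 = (\<Sum>j=1..2. (cmod (L j))^2)"
  have P0: "0 \<le> P" "0 \<le> Q" "0 \<le> A1" "0 \<le> A2" unfolding P_def Q_def A1_def A2_def by (auto intro: sum_nonneg)
  have x1': "x 1 = 1" unfolding x_def by (rule x1)
  have nn: "2 + (n-2) = n" using n2 by simp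
  have split: "(\<Sum>j=1..n. f j) = (\<Sum>j=1..2. f j) + (\<Sum>j=3..n. f j)" for f :: "nat \<Rightarrow> real"
  proof -
    have "(\<Sum>j=1..2+(n-2). f j) = (\<Sum>j=1..2. f j) + (\<Sum>j=2+1..2+(n-2). f j)"
      by (rule sum.ub_add_nat) simp
    thus ?thesis unfolding nn by simp
  qed
  have NPQ: "N = P + Q" unfolding N_def split P_def Q_def by (simp add: numeral_2_eq_2)
  have Npos: "0 < N" unfolding NPQ P_def using P0 x1' by (simp add: add_pos_nonneg)
  have lq: "L j + q j = z^2 * x (n+1-j)" if "j \<in> {1..n}" for j
    using rel2[OF h n2, of j] that unfolding L_def q_def x_def by (simp add: algebra_simps)
  have lhs: "(\<Sum>j=1..n. (cmod (L j + q j))^2) = (cmod z)^4 * N"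
  proof -
    have "(\<Sum>j=1..n. (cmod (L j + q j))^2) = (\<Sum>j=1..n. (cmod z)^4 * (cmod (x (n+1-j)))^2)"
    proof (rule sum.cong)
      fix j assume "j \<in> {1..n}"
      thus "(cmod (L j + q j))^2 = (cmod z)^4 * (cmod (x (n+1-j)))^2"
        using lq by (simp add: norm_mult norm_power power_mult_distrib flip: power_mult)
    qed simp
    also have "\<dots> = (cmod z)^4 * (\<Sum>j=1..n. (cmod (x (n+1-j)))^2)"
      by (simp add: sum_distrib_left)
    also have "(\<Sum>j=1..n. (cmod (x (n+1-j)))^2) = N"
      unfolding N_def using reflect[of 1 n "n+1" "\<lambda>i. (cmod (x i))^2"] n2 by simp
    finally show ?thesis .
  qed
  have q0: "q j = 0" if "j \<in> {1..2}" for j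
    unfolding q_def x_def using xzero[OF h, of "n+3-j"] that by auto
  have low: "(\<Sum>j=1..2. (cmod (L j + q j))^2) = A2"
    unfolding A2_def by (rule sum.cong) (auto simp: q0)
  have qQ: "(\<Sum>j=3..n. (cmod (q j))^2) = Q"
    unfolding Q_def q_def using reflect[of 3 n "n+3" "\<lambda>i. (cmod (x i))^2"] n2 by (cases "3 \<le> n") auto
  have hi: "(\<Sum>j=3..n. (cmod (L j + q j))^2) \<le> (sqrt A1 + sqrt Q)^2"
    using mink[of L q "{3..n}"] unfolding qQ A1_def .
  have bA1: "A1 \<le> delta' n a * P"
  proof -
    have "A1 \<le> lam (\<Sum>j=3..n. (cmod (bco n a j))^2) (\<Sum>j=3..n. (cmod (a j))^2)
       ((cmod (\<Sum>j=3..n. bco n a j * cnj (a j)))^2) * ((cmod (x 1))^2 + (cmod (- x 2))^2)"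
      unfolding A1_def L_def by (rule gram2)
    thus ?thesis unfolding delta'_def P_def by (simp add: lam_sym mult.commute)
  qed
  have bA: "A1 + A2 \<le> delta n a * P"
  proof -
    have "(\<Sum>j=1..n. (cmod (L j))^2) \<le> lam (\<Sum>j=1..n. (cmod (bco n a j))^2) (\<Sum>j=1..n. (cmod (a j))^2)
       ((cmod (\<Sum>j=1..n. bco n a j * cnj (a j)))^2) * ((cmod (x 1))^2 + (cmod (- x 2))^2)"
      unfolding L_def by (rule gram2)
    thus ?thesis unfolding delta_def P_def A1_def A2_def split[of "\<lambda>j. (cmod (L j))^2"] by (simp add: lam_sym add.commute)
  qed
  have sA1: "sqrt A1 \<le> sqrt (delta' n a) * sqrt P"
    using bA1 by (simp add: real_sqrt_mult[symmetric])
  have "(cmod z)^4 * N = A2 + (\<Sum>j=3..n. (cmod (L j + q j))^2)"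
    unfolding lhs[symmetric] split[of "\<lambda>j. (cmod (L j + q j))^2"] low ..
  also have "\<dots> \<le> A2 + (sqrt A1 + sqrt Q)^2" using hi by simp
  also have "\<dots> = (A1 + A2) + 2 * sqrt A1 * sqrt Q + Q"
    using P0 by (simp add: power2_eq_square algebra_simps)
  also have "\<dots> \<le> delta n a * P + 2 * (sqrt (delta' n a) * sqrt P) * sqrt Q + Q"
    using bA sA1 P0 by (intro add_mono mult_right_mono mult_left_mono) auto
  also have "\<dots> = delta n a * (sqrt P)^2 + 1 * (sqrt Q)^2 + 2 * sqrt (delta' n a) * sqrt P * sqrt Q"
    using P0 by (simp add: algebra_simps)
  also have "\<dots> \<le> lam (delta n a) 1 (delta' n a) * ((sqrt P)^2 + (sqrt Q)^2)"
    using P0 delta'_nn by (intro lam_real) auto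
  also have "\<dots> = lam (delta n a) 1 (delta' n a) * N" using P0 NPQ by simp
  finally show ?thesis using Npos by simp
qed



theorem mainTheorem13:
  fixes n :: nat and a :: "nat \<Rightarrow> complex" and z :: complex
  assumes "n \<ge> 2" and "a 1 \<noteq> 0"
    and "z ^ n + (\<Sum>j=1..n. a j * z ^ (j - 1)) = 0"
  shows "cmod z \<le>
    ((1/4) * ((delta n a + 1 + sqrt ((delta n a - 1)^2 + 4 * delta' n a)) / 2)
     + (3/4) * ((1/2) * (delta1 n a + delta n a
                 + sqrt ((delta1 n a - delta n a)^2 + 4 * delta2 n a)) + 1) powr (1/2))
    powr (1/4)"
proof -
  define X where "X = (delta n a + 1 + sqrt ((delta n a - 1)^2 + 4 * delta' n a)) / 2"
  define Y where "Y = (1/2) * (delta1 n a + delta n a + sqrt ((delta1 n a - delta n a)^2 + 4 * delta2 n a)) + 1"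
  have bX: "(cmod z)^4 \<le> X" using bound2[OF assms(3,1)] unfolding X_def lam_def .
  have b8: "(cmod z)^8 \<le> Y" using bound4[OF assms(3,1)] unfolding Y_def lam_def by simp
  have Y0: "0 \<le> Y" using b8 by (meson order_trans zero_le_power norm_ge_zero)
  have m: "sqrt (cmod z ^ 8) \<le> sqrt Y" using b8 by (rule real_sqrt_le_mono)
  have e: "sqrt (cmod z ^ 8) = cmod z ^ 4"
    by (rule real_sqrt_unique) (simp_all flip: power_mult)
  have bY: "(cmod z)^4 \<le> Y powr (1/2)" unfolding powr_half_sqrt[OF Y0] using m e by linarith
  have W: "(cmod z)^4 \<le> (1/4) * X + (3/4) * Y powr (1/2)" using bX bY by linarith
  show ?thesis
  proof (cases "z = 0")
    case True
    then show ?thesis by simp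
  next
    case False
    hence zp: "0 < cmod z" by simp
    have "((cmod z)^4) powr (1/4) = (cmod z powr (real 4)) powr (1/4)"
      using powr_realpow[OF zp, of 4] by simp
    also have "\<dots> = cmod z powr (real 4 * (1/4))" by (rule powr_powr)
    also have "\<dots> = cmod z" using zp by simp
    finally have "cmod z = ((cmod z)^4) powr (1/4)" by simp
    also have "\<dots> \<le> ((1/4) * X + (3/4) * Y powr (1/2)) powr (1/4)"
      using W by (intro powr_mono2) auto
    finally show ?thesis unfolding X_def Y_def .
  qed
qed

end
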